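(* Let $\mathbb{F}$ be an algebraically closed field of characteristic zero, $J_1=E_{12}$ and $J_2=E_{12}+E_{23}$. Let $\underline{A}=(J_2,A_2,A_3)$ and $\underline{B}=(J_1,B_2,B_3)$ be elements of $\mathcal{N}_3^3$ such that $f(\underline{A})=f(\underline{B})$ for all $f\in S_{3,3}$. Then $f(\underline{A})=f(\underline{B})$ for all $f\in P_{3,3}$.
   Context: $E_{ij}$ is the $3\times3$ matrix unit. $\mathcal{N}_3^3$ is the set of triples of nilpotent $3\times3$ matrices over $\mathbb{F}$. $\mathrm{tr}(Y_{i_1}\cdots Y_{i_r})$ denotes the function $\underline{A}\mapsto\mathrm{tr}(A_{i_1}\cdots A_{i_r})$. $S_{3,3}$ is the set consisting of: $\mathrm{tr}(Y_iY_j),\ \mathrm{tr}(Y_i^2Y_j),\ \mathrm{tr}(Y_iY_j^2),\ \mathrm{tr}(Y_i^2Y_j^2),\ \mathrm{tr}(Y_i^2Y_j^2Y_iY_j)$ for $1\le i<j\le3$; $\mathrm{tr}(Y_1Y_2Y_3)$, $\mathrm{tr}(Y_1Y_3Y_2)$; $\mathrm{tr}(Y_i^2Y_jY_k)$ for $\{i,j,k\}=\{1,2,3\}$; $\mathrm{tr}(Y_1^2Y_2Y_1Y_3)$, $\mathrm{tr}(Y_2^2Y_1Y_2Y_3)$, $\mathrm{tr}(Y_3^2Y_1Y_3Y_2)$. $P_{3,3}=S_{3,3}\sqcup P'_{3,3}$, where $P'_{3,3}$ consists of $\mathrm{tr}(Y_i^2Y_j^2Y_k)$ and $\mathrm{tr}(Y_i^2Y_j^2Y_iY_k)$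 for $\{i,j,k\}=\{1,2,3\}$, and $\mathrm{tr}(Y_1^2Y_2^2Y_3^2)$. *)

theory Defs
  imports "HOL-Analysis.Analysis" "HOL-Computational_Algebra.Polynomial"
begin

type_synonym 'a mat3 = "'a ^ 3 ^ 3"

definition matunit :: "3 \<Rightarrow> 3 \<Rightarrow> 'a::semiring_1 mat3" where
  "matunit i j = (\<chi> r c. if r = i \<and> c = j then 1 else 0)"

definition J1 :: "'a::semiring_1 mat3" where "J1 = matunit 1 2"
definition J2 :: "'a::semiring_1 mat3" where "J2 = matunit 1 2 + matunit 2 3"

fun mpow :: "'a::semiring_1 mat3 \<Rightarrow> nat \<Rightarrow> 'a mat3" where
  "mpow A 0 = mat 1"
| "mpow A (Suc n) = A ** mpow A n"

definition nilpotent3 :: "'a::semiring_1 mat3 \<Rightarrow> bool" where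
  "nilpotent3 A \<longleftrightarrow> (\<exists>k. mpow A k = 0)"

definition N33 :: "('a::semiring_1 mat3 \<times> 'a mat3 \<times> 'a mat3) set" where
  "N33 = {(X1, X2, X3). nilpotent3 X1 \<and> nilpotent3 X2 \<and> nilpotent3 X3}"

definition sel :: "'b \<times> 'b \<times> 'b \<Rightarrow> nat \<Rightarrow> 'b" where
  "sel t i = (if i = 1 then fst t else if i = 2 then fst (snd t) else snd (snd t))"

text \<open>tr(Y_{i_1} ... Y_{i_r}) evaluated at a triple, the word being [i_1,...,i_r].\<close>
definition trw :: "'a::semiring_1 mat3 \<times> 'a mat3 \<times> 'a mat3 \<Rightarrow> nat list \<Rightarrow> 'a" where
  "trw t w = trace (foldr (\<lambda>i M. sel t i ** M) w (mat 1))"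

definition S33 :: "nat list set" where
  "S33 =
     {w. \<exists>i j. 1 \<le> i \<and> i < j \<and> j \<le> 3 \<and>
          w \<in> {[i,j], [i,i,j], [i,j,j], [i,i,j,j], [i,i,j,j,i,j]}}
   \<union> {[1,2,3], [1,3,2]}
   \<union> {[i,i,j,k] | i j k. {i,j,k} = {1,2,3::nat}}
   \<union> {[1,1,2,1,3], [2,2,1,2,3], [3,3,1,3,2]}"

definition P33' :: "nat list set" where
  "P33' =
     {[i,i,j,j,k] | i j k. {i,j,k} = {1,2,3::nat}}
   \<union> {[i,i,j,j,i,k] | i j k. {i,j,k} = {1,2,3::nat}}
   \<union> {[1,1,2,2,3,3]}"

definition P33 :: "nat list set" where
  "P33 = S33 \<union> P33'"

end

theory Submission
  imports Defs
begin

definition c1 :: "'a::comm_ring_1 mat3 \<Rightarrow> 'a" where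
  "c1 N = N$1$1 + N$2$2 + N$3$3"
definition c2 :: "'a::comm_ring_1 mat3 \<Rightarrow> 'a" where
  "c2 N = N$1$1*N$2$2 - N$1$2*N$2$1 + N$1$1*N$3$3 - N$1$3*N$3$1 + N$2$2*N$3$3 - N$2$3*N$3$2"

lemma chi: "det (mat l - (N::'a::comm_ring_1 mat3)) = l^3 - c1 N * l^2 + c2 N * l - det N"
  unfolding det_3 c1_def c2_def by (simp add: mat_def power2_eq_square power3_eq_cube algebra_simps)

lemma mpow_vec: fixes N :: "'a::field mat3"
  assumes "N *v x = l *s x" shows "mpow N k *v x = l^k *s x"
  by (induction k) (auto simp: assms matrix_vector_mul_assoc[symmetric] vector_scalar_commute)

lemma nil_root:
  fixes N :: "'a::field mat3"
  assumes "nilpotent3 N" "det (mat l - N) = 0" shows "l = 0"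
proof -
  obtain k where k: "mpow N k = 0" using assms(1) unfolding nilpotent3_def by blast
  have "\<not> invertible (mat l - N)" using assms(2) invertible_det_nz by blast
  then obtain x where x: "(mat l - N) *v x = 0" "x \<noteq> 0"
    unfolding invertible_left_inverse matrix_left_invertible_ker by blast
  have ml: "mat l *v x = l *s x"
    by (simp add: vec_eq_iff matrix_vector_mult_def mat_def sum_3 forall_3)
  have "N *v x = l *s x" using x(1) ml
    by (simp add: matrix_vector_mult_diff_rdistrib)
  then have "mpow N k *v x = l^k *s x" by (rule mpow_vec)
  then have "l^k *s x = 0" using k by simp
  then have "l^k = 0" using x(2) by (simp add: vector_mul_eq_0)
  then show ?thesis by simp
qed

lemma nil_coeffs:
  fixes N :: "'a::alg_closed_field mat3"
  assumes "nilpotent3 N" shows "c1 N = 0 \<and> c2 N = 0 \<and> det N = 0"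
proof -
  have R: "\<And>l. l^3 - c1 N * l^2 + c2 N * l - det N = 0 \<Longrightarrow> l = 0"
    using nil_root[OF assms] chi by metis
  obtain r where "(\<Sum>k\<le>3. (\<lambda>k. [- det N, c2 N, - c1 N, 1] ! k) k * r ^ k) = 0"
    using alg_closed[of 3 "\<lambda>k. [- det N, c2 N, - c1 N, 1] ! k"] by auto
  then have "r^3 - c1 N * r^2 + c2 N * r - det N = 0"
    by (simp add: numeral_3_eq_3 numeral_2_eq_2 algebra_simps)
  then have "r = 0" using R by blast
  then have d: "det N = 0" using \<open>r^3 - c1 N * r^2 + c2 N * r - det N = 0\<close> by simp
  obtain r2 where "(\<Sum>k\<le>2. (\<lambda>k. [c2 N, - c1 N, 1] ! k) k * r2 ^ k) = 0"
    using alg_closed[of 2 "\<lambda>k. [c2 N, - c1 N, 1] ! k"] by auto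
  then have "r2^2 - c1 N * r2 + c2 N = 0"
    by (simp add: numeral_2_eq_2 algebra_simps)
  then have "r2^3 - c1 N * r2^2 + c2 N * r2 - det N = 0"
    using d by (simp add: power2_eq_square power3_eq_cube algebra_simps)
      (metis distrib_left mult.commute mult_zero_left)
  then have "r2 = 0" using R by blast
  then have e: "c2 N = 0" using \<open>r2^2 - c1 N * r2 + c2 N = 0\<close> by simp
  have "c1 N^3 - c1 N * c1 N^2 + c2 N * c1 N - det N = 0"
    using d e by (simp add: power2_eq_square power3_eq_cube)
  then have "c1 N = 0" using R by blast
  then show ?thesis using d e by simp
qed
lemma CH_entry:
  fixes N :: "'a::field mat3"
  shows "(N ** (N ** N))$i$j = c1 N * (N**N)$i$j - c2 N * N$i$j + (if i = j then det N else 0)"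
proof -
  have "\<forall>i j. (N ** (N ** N))$i$j = c1 N * (N**N)$i$j - c2 N * N$i$j + (if i = j then det N else 0)"
    unfolding c1_def c2_def det_3 forall_3
    by (simp add: sum_3 matrix_matrix_mult_def; intro conjI; algebra)
  then show ?thesis by blast
qed

lemma cube0:
  fixes N :: "'a::field mat3"
  assumes "c1 N = 0" "c2 N = 0" "det N = 0"
  shows "N ** (N ** N) = 0"
  using assms by (simp add: vec_eq_iff CH_entry)

lemma minor_id:
  fixes N :: "'a::field mat3"
  shows "((N**N)$3$2 - c1 N * N$3$2) * ((N**N)$2$1 - c1 N * N$2$1)
     - ((N**N)$3$1 - c1 N * N$3$1) * ((N**N)$2$2 - c1 N * N$2$2 + c2 N) = det N * N$3$1"
  unfolding c1_def c2_def det_3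
  by (simp add: sum_3 matrix_matrix_mult_def) algebra

lemma minor0:
  fixes N :: "'a::field mat3"
  assumes "c1 N = 0" "c2 N = 0" "det N = 0"
  shows "(N**N)$3$2 * (N**N)$2$1 = (N**N)$3$1 * (N**N)$2$2"
  using minor_id[of N] assms by simp
lemma J2sq: "(J2::'a::semiring_1 mat3) ** J2 = matunit 1 3"
  unfolding J2_def matunit_def
  by (simp add: vec_eq_iff forall_3 sum_3 matrix_matrix_mult_def)

lemma J1sq: "(J1::'a::semiring_1 mat3) ** J1 = 0"
  unfolding J1_def matunit_def
  by (simp add: vec_eq_iff forall_3 sum_3 matrix_matrix_mult_def)

lemma Bnorm:
  fixes C M Q :: "'a::field mat3"
  assumes Q: "Q$3$2 * Q$2$1 = Q$3$1 * Q$2$2"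
    and h1: "trace (M ** matunit 1 3) = 0"
    and h2: "trace (matunit 1 3 ** Q) = 0"
    and h3: "trace (J2 ** Q) = 0"
    and h4: "trace (matunit 1 3 ** C ** M) = 0"
  shows "trace (matunit 1 3 ** Q ** M) = 0" "trace (Q ** matunit 1 3 ** M) = 0"
        "trace (matunit 1 3 ** Q ** J2 ** M) = 0" "trace (Q ** matunit 1 3 ** C ** M) = 0"
proof -
  have f1: "M$3$1 = 0" using h1 by (simp add: trace_def matunit_def sum_3 matrix_matrix_mult_def)
  have f2: "Q$3$1 = 0" using h2 by (simp add: trace_def matunit_def sum_3 matrix_matrix_mult_def)
  have f3: "Q$2$1 = - Q$3$2" using h3 by (simp add: trace_def J2_def matunit_def sum_3 matrix_matrix_mult_def eq_neg_iff_add_eq_0)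
  have f4: "C$3$1 * M$1$1 + C$3$2 * M$2$1 + C$3$3 * M$3$1 = 0"
    using h4 by (simp add: trace_def matunit_def sum_3 matrix_matrix_mult_def)
  have "Q$3$2 * Q$3$2 = 0" using Q f2 f3 by simp
  then have f5: "Q$3$2 = 0" by simp
  then have f6: "Q$2$1 = 0" using f3 by simp
  show "trace (matunit 1 3 ** Q ** M) = 0" "trace (Q ** matunit 1 3 ** M) = 0"
        "trace (matunit 1 3 ** Q ** J2 ** M) = 0"
    using f1 f2 f5 f6 by (simp_all add: trace_def J2_def matunit_def sum_3 matrix_matrix_mult_def)
  have "trace (Q ** matunit 1 3 ** C ** M) = (C$3$1 * M$1$1 + C$3$2 * M$2$1 + C$3$3 * M$3$1) * Q$1$1"
    using f2 f6 by (simp add: trace_def matunit_def sum_3 matrix_matrix_mult_def algebra_simps)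
  then show "trace (Q ** matunit 1 3 ** C ** M) = 0" using f4 by simp
qed
lemma mpow_conj:
  fixes L P X :: "'a::field mat3"
  assumes "L ** P = mat 1"
  shows "mpow (L ** X ** P) k = L ** mpow X k ** P"
proof (induction k)
  case 0 then show ?case using assms by simp
next
  case (Suc k)
  have PL: "P ** L = mat 1" using assms matrix_left_right_inverse[of P L] by simp
  have "mpow (L ** X ** P) (Suc k) = (L ** X ** P) ** (L ** mpow X k ** P)"
    using Suc by simp
  also have "\<dots> = L ** X ** (P ** L) ** mpow X k ** P"
    by (simp only: matrix_mul_assoc)
  also have "\<dots> = L ** (X ** mpow X k) ** P"
    by (simp only: PL matrix_mul_rid matrix_mul_assoc)
  finally show ?case by simp
qed

lemma Bside:
  fixes M B C :: "'a::alg_closed_field mat3"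
  assumes nB: "nilpotent3 B" and nC: "nilpotent3 C"
    and h1: "trace (M ** (B ** B)) = 0"
    and h2: "trace ((B ** B) ** (C ** C)) = 0"
    and h3: "trace (B ** (C ** C)) = 0"
    and h4: "trace ((B ** B) ** C ** M) = 0"
  shows "trace ((B ** B) ** (C ** C) ** M) = 0 \<and> trace ((C ** C) ** (B ** B) ** M) = 0 \<and>
         trace ((B ** B) ** (C ** C) ** B ** M) = 0 \<and> trace ((C ** C) ** (B ** B) ** C ** M) = 0"
proof (cases "B ** B = 0")
  case True
  then show ?thesis by (simp add: matrix_mul_assoc[symmetric]) (simp add: trace_def)
next
  case False
  have B3: "B ** (B ** B) = 0" using nil_coeffs[OF nB] cube0 by blast
  obtain w where sw: "(B ** B) *v w \<noteq> 0" using False matrix_eq[of "B ** B" 0] by auto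
  define s where "s = (B ** B) *v w"
  define t where "t = B *v w"
  define P :: "'a mat3" where "P = (\<chi> i j. if j = 1 then s$i else if j = 2 then t$i else w$i)"
  have Pv: "P *v x = x$1 *s s + x$2 *s t + x$3 *s w" for x
    by (simp add: P_def vec_eq_iff matrix_vector_mult_def sum_3 mult.commute)
  have Bs: "B *v s = 0" unfolding s_def by (simp add: matrix_vector_mul_assoc B3)
  have Bt: "B *v t = s" unfolding s_def t_def by (simp add: matrix_vector_mul_assoc)
  have Bw: "B *v w = t" unfolding t_def ..
  have BBs: "(B ** B) *v s = 0" using Bs by (simp add: matrix_vector_mul_assoc[symmetric])
  have BBt: "(B ** B) *v t = 0" using Bs Bt by (simp add: matrix_vector_mul_assoc[symmetric])
  have BBw: "(B ** B) *v w = s" unfolding s_def ..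
  have inj: "\<forall>x. P *v x = 0 \<longrightarrow> x = 0"
  proof (intro allI impI)
    fix x assume x: "P *v x = 0"
    have "(B ** B) *v (P *v x) = x$3 *s s"
      unfolding Pv by (simp add: matrix_vector_right_distrib vector_scalar_commute BBs BBt BBw)
    then have x3: "x$3 = 0" using x s_def sw by simp
    have "B *v (P *v x) = x$2 *s s + x$3 *s t"
      unfolding Pv by (simp add: matrix_vector_right_distrib vector_scalar_commute Bs Bt Bw)
    then have x2: "x$2 = 0" using x x3 s_def sw by simp
    have "x$1 *s s = 0" using x x2 x3 Pv[of x] by simp
    then have x1: "x$1 = 0" using s_def sw by simp
    show "x = 0" using x1 x2 x3 by (simp add: vec_eq_iff forall_3)
  qed
  have "\<exists>L. L ** P = mat 1" unfolding matrix_left_invertible_ker by (rule inj)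
  then obtain L where LP: "L ** P = mat 1" by blast
  then have PL: "P ** L = mat 1" using matrix_left_right_inverse[of P L] by simp
  have BP: "B ** P = P ** J2"
  proof -
    have "(B ** P) *v x = (P ** J2) *v x" for x
    proof -
      have J2x: "J2 *v x = (\<chi> i. if i = 1 then x$2 else if i = 2 then x$3 else 0)"
        by (simp add: J2_def matunit_def vec_eq_iff forall_3 matrix_vector_mult_def sum_3)
      have "(B ** P) *v x = x$2 *s s + x$3 *s t"
        unfolding matrix_vector_mul_assoc[symmetric] Pv
        by (simp add: matrix_vector_right_distrib vector_scalar_commute Bs Bt Bw)
      moreover have "(P ** J2) *v x = x$2 *s s + x$3 *s t"
        unfolding matrix_vector_mul_assoc[symmetric] Pv J2x by simp
      ultimately show ?thesis by simp
    qed
    then show ?thesis using matrix_eq[of "B ** P" "P ** J2"] by blast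
  qed
  define cj where "cj X = L ** X ** P" for X :: "'a mat3"
  have cmul: "cj (X ** Y) = cj X ** cj Y" for X Y
  proof -
    have "cj X ** cj Y = L ** X ** (P ** L) ** Y ** P" unfolding cj_def by (simp add: matrix_mul_assoc)
    then show ?thesis unfolding cj_def using PL by (simp add: matrix_mul_assoc)
  qed
  have ctr: "trace (cj X) = trace X" for X
  proof -
    have "trace (cj X) = trace (P ** (L ** X))" unfolding cj_def
      by (rule trace_mul_sym)
    also have "\<dots> = trace X" using PL by (simp add: matrix_mul_assoc)
    finally show ?thesis .
  qed
  have cB: "cj B = J2" unfolding cj_def
    by (simp add: matrix_mul_assoc[symmetric] BP) (simp add: matrix_mul_assoc LP)
  have nC': "nilpotent3 (cj C)"
  proof -
    obtain k where "mpow C k = 0" using nC unfolding nilpotent3_def by blast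
    then have "mpow (cj C) k = 0" unfolding cj_def mpow_conj[OF LP] by simp
    then show ?thesis unfolding nilpotent3_def by blast
  qed
  have cC: "c1 (cj C) = 0" "c2 (cj C) = 0" "det (cj C) = 0" using nil_coeffs[OF nC'] by auto
  have Q: "(cj C ** cj C)$3$2 * (cj C ** cj C)$2$1 = (cj C ** cj C)$3$1 * (cj C ** cj C)$2$2"
    using minor0[OF cC] .
  note tr = J2sq[symmetric] cB[symmetric] cmul[symmetric] ctr matrix_mul_assoc
  have g1: "trace (cj M ** matunit 1 3) = 0" using h1 by (simp add: tr)
  have g2: "trace (matunit 1 3 ** (cj C ** cj C)) = 0" using h2 by (simp add: tr)
  have g3: "trace (J2 ** (cj C ** cj C)) = 0" using h3 by (simp add: tr)
  have g4: "trace (matunit 1 3 ** cj C ** cj M) = 0" using h4 by (simp add: tr)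
  note R = Bnorm[OF Q g1 g2 g3 g4]
  show ?thesis using R by (simp add: tr)
qed
lemma nil_col:
  fixes N :: "'a::alg_closed_field mat3"
  assumes "nilpotent3 N" "N$2$1 = 0" "N$3$1 = 0"
  shows "\<forall>i. N$i$1 = 0" "\<forall>i k. i \<noteq> 1 \<longrightarrow> (N ** N)$i$k = 0"
proof -
  have c: "c1 N = 0" "c2 N = 0" "det N = 0" using nil_coeffs[OF assms(1)] by auto
  have "(N ** (N ** N))$1$1 = 0" using cube0[OF c] by simp
  then have "N$1$1 ^ 3 = 0" using assms(2,3) by (simp add: matrix_matrix_mult_def sum_3 power3_eq_cube)
  then have n11: "N$1$1 = 0" by simp
  then show "\<forall>i. N$i$1 = 0" using assms(2,3) by (simp add: forall_3)
  have e1: "N$3$3 = - N$2$2" using c(1) n11 by (simp add: c1_def eq_neg_iff_add_eq_0 add.commute)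
  have e2: "N$2$3 * N$3$2 = N$2$2 * N$3$3" using c(2) n11 assms(2,3) by (simp add: c2_def)
  show "\<forall>i k. i \<noteq> 1 \<longrightarrow> (N ** N)$i$k = 0"
    using n11 assms(2,3) e1 e2 unfolding forall_3
    by (simp add: matrix_matrix_mult_def sum_3 algebra_simps power2_eq_square)
qed

lemma nil_row:
  fixes N :: "'a::alg_closed_field mat3"
  assumes "nilpotent3 N" "N$3$1 = 0" "N$3$2 = 0"
  shows "\<forall>k. N$3$k = 0" "\<forall>i k. k \<noteq> 3 \<longrightarrow> (N ** N)$i$k = 0"
proof -
  have c: "c1 N = 0" "c2 N = 0" "det N = 0" using nil_coeffs[OF assms(1)] by auto
  have "(N ** (N ** N))$3$3 = 0" using cube0[OF c] by simp
  then have "N$3$3 ^ 3 = 0" using assms(2,3) by (simp add: matrix_matrix_mult_def sum_3 power3_eq_cube)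
  then have n33: "N$3$3 = 0" by simp
  then show "\<forall>k. N$3$k = 0" using assms(2,3) by (simp add: forall_3)
  have e1: "N$1$1 = - N$2$2" using c(1) n33 by (simp add: c1_def eq_neg_iff_add_eq_0)
  have e2: "N$1$2 * N$2$1 = N$1$1 * N$2$2" using c(2) n33 assms(2,3) by (simp add: c2_def)
  show "\<forall>i k. k \<noteq> 3 \<longrightarrow> (N ** N)$i$k = 0"
    using n33 assms(2,3) e1 e2 unfolding forall_3
    by (simp add: matrix_matrix_mult_def sum_3 algebra_simps power2_eq_square)
qed

lemma foldr_col:
  assumes "\<forall>x i. (sel t x)$i$1 = 0" "w \<noteq> []"
  shows "\<forall>i. (foldr (\<lambda>i M. sel t i ** M) w (mat 1 :: 'a::comm_semiring_1 mat3))$i$1 = 0"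
  using assms(2)
proof (induction w)
  case Nil then show ?case by simp
next
  case (Cons x w)
  show ?case
  proof (cases "w = []")
    case True then show ?thesis using assms(1) by simp
  next
    case False
    then have "\<forall>i. (foldr (\<lambda>i M. sel t i ** M) w (mat 1 :: 'a mat3))$i$1 = 0" using Cons by blast
    then show ?thesis by (simp add: matrix_matrix_mult_def)
  qed
qed

lemma trace_col:
  fixes S W :: "'a::comm_semiring_1 mat3"
  assumes "\<forall>i. W$i$1 = 0" "\<forall>i k. i \<noteq> 1 \<longrightarrow> S$i$k = 0"
  shows "trace (S ** W) = 0"
  using assms by (simp add: trace_def matrix_matrix_mult_def sum_3)

lemma trace_row:
  fixes S W :: "'a::comm_semiring_1 mat3"
  assumes "\<forall>k. W$3$k = 0" "\<forall>i k. k \<noteq> 3 \<longrightarrow> S$i$k = 0"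
  shows "trace (S ** W) = 0"
  using assms by (simp add: trace_def matrix_matrix_mult_def sum_3)

lemma trw_sq:
  "trw t (a # a # w) = trace ((sel t a ** sel t a) ** foldr (\<lambda>i M. sel t i ** M) w (mat 1))"
  by (simp add: trw_def matrix_mul_assoc)

lemma word_col:
  fixes t :: "'a::comm_semiring_1 mat3 \<times> 'a mat3 \<times> 'a mat3"
  assumes "\<forall>x i. (sel t x)$i$1 = 0" "\<forall>x i k. i \<noteq> 1 \<longrightarrow> (sel t x ** sel t x)$i$k = 0"
  shows "trw t (a # a # b # w) = 0"
  unfolding trw_sq using assms foldr_col[OF assms(1), of "b # w"] by (intro trace_col) auto

lemma word_row:
  fixes t :: "'a::comm_semiring_1 mat3 \<times> 'a mat3 \<times> 'a mat3"
  assumes "\<forall>x k. (sel t x)$3$k = 0" "\<forall>x i k. k \<noteq> 3 \<longrightarrow> (sel t x ** sel t x)$i$k = 0"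
  shows "trw t (a # a # b # w) = 0"
  unfolding trw_sq
proof (rule trace_row)
  show "\<forall>k. (foldr (\<lambda>i M. sel t i ** M) (b # w) (mat 1))$3$k = 0"
    using assms(1) by (simp add: matrix_matrix_mult_def)
qed (use assms in auto)

lemma J2props:
  "\<forall>i. (J2::'a::semiring_1 mat3)$i$1 = 0" "\<forall>k. (J2::'a::semiring_1 mat3)$3$k = 0"
  "\<forall>i k. i \<noteq> 1 \<longrightarrow> ((J2::'a::semiring_1 mat3) ** J2)$i$k = 0"
  "\<forall>i k. k \<noteq> 3 \<longrightarrow> ((J2::'a::semiring_1 mat3) ** J2)$i$k = 0"
  by (simp_all add: J2sq) (simp_all add: J2_def matunit_def)

lemma Aside:
  fixes A2 A3 :: "'a::alg_closed_field mat3"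
  assumes n2: "nilpotent3 A2" and n3: "nilpotent3 A3"
    and z: "A2$3$1 = 0" "A3$3$1 = 0" "A2$3$2 * A2$2$1 = 0" "A3$3$2 * A3$2$1 = 0"
       "A2$3$2 * A3$2$1 = 0" "A3$3$2 * A2$2$1 = 0"
  shows "trw (J2, A2, A3) (a # a # b # w) = 0"
proof (cases "A2$2$1 = 0 \<and> A3$2$1 = 0")
  case True
  note c2 = nil_col[OF n2] and c3 = nil_col[OF n3]
  show ?thesis
  proof (rule word_col)
    show "\<forall>x i. (sel (J2, A2, A3) x)$i$1 = 0"
      using c2 c3 True z J2props by (simp add: sel_def)
    show "\<forall>x i k. i \<noteq> 1 \<longrightarrow> (sel (J2, A2, A3) x ** sel (J2, A2, A3) x)$i$k = 0"
      using c2 c3 True z J2props by (simp add: sel_def)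
  qed
next
  case False
  then have r: "A2$3$2 = 0" "A3$3$2 = 0" using z by auto
  note c2 = nil_row[OF n2] and c3 = nil_row[OF n3]
  show ?thesis
  proof (rule word_row)
    show "\<forall>x k. (sel (J2, A2, A3) x)$3$k = 0"
      using c2 c3 r z J2props by (simp add: sel_def)
    show "\<forall>x i k. k \<noteq> 3 \<longrightarrow> (sel (J2, A2, A3) x ** sel (J2, A2, A3) x)$i$k = 0"
      using c2 c3 r z J2props by (simp add: sel_def)
  qed
qed
lemma perm3:
  assumes "{i, j, k} = {1, 2, 3::nat}"
  shows "(i, j, k) \<in> {(1,2,3), (1,3,2), (2,1,3), (2,3,1), (3,1,2), (3,2,1)}"
proof -
  have "i \<in> {i,j,k}" "j \<in> {i,j,k}" "k \<in> {i,j,k}" by simp_all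
  then have "i \<in> {1,2,3}" "j \<in> {1,2,3}" "k \<in> {1,2,3}" unfolding assms by simp_all
  then have a: "i = 1 \<or> i = 2 \<or> i = 3" "j = 1 \<or> j = 2 \<or> j = 3" "k = 1 \<or> k = 2 \<or> k = 3" by simp_all
  have b: "1 \<in> {i,j,k}" "2 \<in> {i,j,k}" "3 \<in> {i,j,k}" unfolding assms by simp_all
  show ?thesis using a b by (elim disjE) simp_all
qed

lemma P33'_cases:
  assumes "f \<in> P33'"
  shows "f \<in> {[1,1,2,2,3], [1,1,3,3,2], [2,2,1,1,3], [2,2,3,3,1], [3,3,1,1,2], [3,3,2,2,1],
     [1,1,2,2,1,3], [1,1,3,3,1,2], [2,2,1,1,2,3], [2,2,3,3,2,1], [3,3,1,1,3,2], [3,3,2,2,3,1],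
     [1,1,2,2,3,3]}"
  using assms unfolding P33'_def
proof (elim UnE)
  assume "f \<in> {[i,i,j,j,k] | i j k. {i,j,k} = {1,2,3::nat}}"
  then show ?thesis
  proof (elim CollectE exE conjE)
    fix i j k assume f: "f = [i,i,j,j,k]" and p: "{i,j,k} = {1,2,3::nat}"
    show ?thesis using perm3[OF p] unfolding f by auto
  qed
next
  assume "f \<in> {[i,i,j,j,i,k] | i j k. {i,j,k} = {1,2,3::nat}}"
  then show ?thesis
  proof (elim CollectE exE conjE)
    fix i j k assume f: "f = [i,i,j,j,i,k]" and p: "{i,j,k} = {1,2,3::nat}"
    show ?thesis using perm3[OF p] unfolding f by auto
  qed
qed simp

lemma S33I1:
  assumes "1 \<le> i" "i < j" "j \<le> 3" "w \<in> {[i,j], [i,i,j], [i,j,j], [i,i,j,j], [i,i,j,j,i,j]}"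
  shows "w \<in> S33"
  unfolding S33_def
  by (rule UnI1, rule UnI1, rule UnI1, rule CollectI, rule exI[of _ i], rule exI[of _ j]) (use assms in simp)

lemma S33I3:
  assumes "{i,j,k} = {1,2,3::nat}"
  shows "[i,i,j,k] \<in> S33"
  unfolding S33_def
  by (rule UnI1, rule UnI2, rule CollectI, rule exI[of _ i], rule exI[of _ j], rule exI[of _ k]) (use assms in simp)

lemma memS:
  "[1,1,2] \<in> S33" "[1,1,3] \<in> S33" "[1,1,2,2] \<in> S33" "[1,1,3,3] \<in> S33"
  "[1,2,2] \<in> S33" "[2,3,3] \<in> S33" "[2,2,3,3] \<in> S33"
  subgoal by (rule S33I1[of 1 2]; simp)
  subgoal by (rule S33I1[of 1 3]; simp)
  subgoal by (rule S33I1[of 1 2]; simp)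
  subgoal by (rule S33I1[of 1 3]; simp)
  subgoal by (rule S33I1[of 1 2]; simp)
  subgoal by (rule S33I1[of 2 3]; simp)
  subgoal by (rule S33I1[of 2 3]; simp)
  done

lemma memS2: "[1,1,2,3] \<in> S33" "[1,1,3,2] \<in> S33" "[2,2,3,1] \<in> S33"
  subgoal by (rule S33I3) auto
  subgoal by (rule S33I3) auto
  subgoal by (rule S33I3) auto
  done
lemma trace_zero: "trace (0::'a::semiring_1 mat3) = 0"
  by (simp add: trace_def)

lemma J1J1X: "(J1::'a::semiring_1 mat3) ** (J1 ** X) = 0"
  by (simp add: matrix_mul_assoc J1sq)

lemma J2J2X: "(J2::'a::semiring_1 mat3) ** (J2 ** X) = matunit 1 3 ** X"
  by (simp add: matrix_mul_assoc J2sq)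

lemma tr13: "trace (matunit 1 3 ** (X::'a::semiring_1 mat3)) = X$3$1"
  by (simp add: trace_def matrix_matrix_mult_def sum_3 matunit_def)

lemma trw_rot: "trw (t::'a::comm_semiring_1 mat3 \<times> 'a mat3 \<times> 'a mat3) [x, y, y] = trw t [y, y, x]"
proof -
  have "trace (sel t x ** (sel t y ** sel t y)) = trace ((sel t y ** sel t y) ** sel t x)"
    by (rule trace_mul_sym)
  then show ?thesis unfolding trw_def by (simp add: matrix_mul_assoc)
qed

theorem lemma6p1:
  fixes A2 A3 B2 B3 :: "'a::{alg_closed_field, field_char_0} ^ 3 ^ 3"
  assumes "(J2, A2, A3) \<in> N33"
    and "(J1, B2, B3) \<in> N33"
    and "\<forall>f\<in>S33. trw (J2, A2, A3) f = trw (J1, B2, B3) f"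
  shows "\<forall>f\<in>P33. trw (J2, A2, A3) f = trw (J1, B2, B3) f"
proof -
  have nA: "nilpotent3 A2" "nilpotent3 A3" using assms(1) by (simp_all add: N33_def)
  have nB: "nilpotent3 B2" "nilpotent3 B3" using assms(2) by (simp_all add: N33_def)
  have hyp: "\<And>f. f \<in> S33 \<Longrightarrow> trw (J2, A2, A3) f = trw (J1, B2, B3) f" using assms(3) by blast
  note ev = trw_def sel_def matrix_mul_rid J1sq J1J1X trace_zero times0_right J2J2X tr13
  have z1: "A2$3$1 = 0" using hyp[OF memS(1)] by (simp add: ev)
  have z2: "A3$3$1 = 0" using hyp[OF memS(2)] by (simp add: ev)
  have "(A2 ** A2)$3$1 = 0" using hyp[OF memS(3)] by (simp add: ev)
  then have z3: "A2$3$2 * A2$2$1 = 0" using z1 by (simp add: matrix_matrix_mult_def sum_3)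
  have "(A3 ** A3)$3$1 = 0" using hyp[OF memS(4)] by (simp add: ev)
  then have z4: "A3$3$2 * A3$2$1 = 0" using z2 by (simp add: matrix_matrix_mult_def sum_3)
  have "(A2 ** A3)$3$1 = 0" using hyp[OF memS2(1)] by (simp add: ev)
  then have z5: "A2$3$2 * A3$2$1 = 0" using z1 z2 by (simp add: matrix_matrix_mult_def sum_3)
  have "(A3 ** A2)$3$1 = 0" using hyp[OF memS2(2)] by (simp add: ev)
  then have z6: "A3$3$2 * A2$2$1 = 0" using z1 z2 by (simp add: matrix_matrix_mult_def sum_3)
  have AZ: "\<And>a b w. trw (J2, A2, A3) (a # a # b # w) = 0"
    using Aside[OF nA z1 z2 z3 z4 z5 z6] by blast
  have "trw (J1, B2, B3) [1,2,2] = 0" using hyp[OF memS(5)] trw_rot[of "(J2, A2, A3)" 1 2] AZ by simp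
  then have h1: "trace (J1 ** (B2 ** B2)) = 0" by (simp add: trw_def sel_def)
  have "trw (J1, B2, B3) [2,2,3,3] = 0" using hyp[OF memS(7)] AZ by simp
  then have h2: "trace ((B2 ** B2) ** (B3 ** B3)) = 0" by (simp add: trw_def sel_def matrix_mul_assoc)
  have "trw (J1, B2, B3) [2,3,3] = 0" using hyp[OF memS(6)] trw_rot[of "(J2, A2, A3)" 2 3] AZ by simp
  then have h3: "trace (B2 ** (B3 ** B3)) = 0" by (simp add: trw_def sel_def)
  have "trw (J1, B2, B3) [2,2,3,1] = 0" using hyp[OF memS2(3)] AZ by simp
  then have h4: "trace ((B2 ** B2) ** B3 ** J1) = 0" by (simp add: trw_def sel_def matrix_mul_assoc)
  note W = Bside[OF nB h1 h2 h3 h4]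
  have w1: "trw (J1, B2, B3) [2,2,3,3,1] = 0" using W by (simp add: trw_def sel_def matrix_mul_assoc)
  have w2: "trw (J1, B2, B3) [3,3,2,2,1] = 0" using W by (simp add: trw_def sel_def matrix_mul_assoc)
  have w3: "trw (J1, B2, B3) [2,2,3,3,2,1] = 0" using W by (simp add: trw_def sel_def matrix_mul_assoc)
  have w4: "trw (J1, B2, B3) [3,3,2,2,3,1] = 0" using W by (simp add: trw_def sel_def matrix_mul_assoc)
  have v: "trw (J1, B2, B3) [1,1,2,2,3] = 0" "trw (J1, B2, B3) [1,1,3,3,2] = 0"
    "trw (J1, B2, B3) [2,2,1,1,3] = 0" "trw (J1, B2, B3) [3,3,1,1,2] = 0"
    "trw (J1, B2, B3) [1,1,2,2,1,3] = 0" "trw (J1, B2, B3) [1,1,3,3,1,2] = 0"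
    "trw (J1, B2, B3) [2,2,1,1,2,3] = 0" "trw (J1, B2, B3) [3,3,1,1,3,2] = 0"
    "trw (J1, B2, B3) [1,1,2,2,3,3] = 0"
    by (simp_all add: ev)
  show ?thesis
  proof
    fix f assume "f \<in> P33"
    then have "f \<in> S33 \<or> f \<in> P33'" unfolding P33_def by blast
    then show "trw (J2, A2, A3) f = trw (J1, B2, B3) f"
    proof
      assume "f \<in> S33" then show ?thesis by (rule hyp)
    next
      assume "f \<in> P33'"
      then have "f \<in> {[1,1,2,2,3], [1,1,3,3,2], [2,2,1,1,3], [2,2,3,3,1], [3,3,1,1,2], [3,3,2,2,1],
        [1,1,2,2,1,3], [1,1,3,3,1,2], [2,2,1,1,2,3], [2,2,3,3,2,1], [3,3,1,1,3,2], [3,3,2,2,3,1],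
        [1,1,2,2,3,3]}" by (rule P33'_cases)
      then show ?thesis
      proof (elim insertE emptyE)
      qed (simp_all only: AZ w1 w2 w3 w4 v)
    qed
  qed
qed
end
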